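(* For every integer $m\ge 0$ and $n\ge 0$, $$x^n=\sum_{k=0}^{\lfloor n/2\rfloor}(-s)^k\frac{[n]!}{[k]!\,[n-2k]!}\,\frac{[n+m-2k]!}{[n+m-k]!}\,l_{n-2k}(x,m,s,q).$$ Consequently, if $\Lambda_{m,q}$ is the linear functional on polynomials in $x$ determined by $\Lambda_{m,q}\big(l_n(x,m,-q^m,q)\big)=[n=0]$ for all $n\ge0$, then $\Lambda_{m,q}(x^{2n+1})=0$ and $$\Lambda_{m,q}(x^{2n})=q^{mn}\,\frac{[2n]!\,[m]!}{[n]!\,[m+n]!}\quad (n\ge 0).$$
   Context: $q$ is an indeterminate; $[n]=\frac{1-q^n}{1-q}$, $[n]!=[1][2]\cdots[n]$, $[0]!=1$. For an integer $m\ge0$ and indeterminates $x,s$, $$l_n(x,m,s,q)=\sum_{k=0}^{\lfloor n/2\rfloor}s^k q^{\binom k2}\frac{[n]!}{[k]!\,[n-2k]!}\,\frac{[m+n-k-1]!}{[m+n-1]!}\,x^{n-2k}\quad (n\ge1),\qquad l_0(x,m,s,q)=1.$$ $[P]$ is the Iverson bracket. *)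

theory Defs
  imports "HOL-Computational_Algebra.Polynomial"
begin

definition qint :: "'a::field \<Rightarrow> nat \<Rightarrow> 'a" where
  "qint q n = (1 - q ^ n) / (1 - q)"

definition qfact :: "'a::field \<Rightarrow> nat \<Rightarrow> 'a" where
  "qfact q n = (\<Prod>i\<in>{1..n}. qint q i)"

definition lpoly :: "'a::field \<Rightarrow> nat \<Rightarrow> 'a \<Rightarrow> nat \<Rightarrow> 'a poly" where
  "lpoly q m s n =
     (if n = 0 then 1
      else (\<Sum>k\<in>{0..n div 2}.
              smult (s ^ k * q ^ (k choose 2) * qfact q n / (qfact q k * qfact q (n - 2 * k))
                     * qfact q (m + n - k - 1) / qfact q (m + n - 1))
                    (monom 1 (n - 2 * k))))"

end

theory Submission
  imports Defs
begin


definition acoef :: "'a::field \<Rightarrow> nat \<Rightarrow> 'a \<Rightarrow> nat \<Rightarrow> nat \<Rightarrow> 'a" where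
  "acoef q m s p k = s ^ k * q ^ (k choose 2) * qfact q p / (qfact q k * qfact q (p - 2 * k))
                     * qfact q (m + p - k - 1) / qfact q (m + p - 1)"

lemma qfact_0[simp]: "qfact q 0 = 1" by (simp add: qfact_def)
lemma qfact_Suc: "qfact q (Suc k) = qfact q k * qint q (Suc k)"
  by (simp add: qfact_def prod.cl_ivl_Suc)

lemma qint_nz: assumes qg: "\<forall>k\<ge>1. q ^ k \<noteq> (1::'a::field)" and "k \<ge> 1" shows "qint q k \<noteq> 0"
proof -
  have "q \<noteq> 1" using qg by (metis power_one_right order_refl)
  moreover have "q ^ k \<noteq> 1" using qg assms(2) by blast
  ultimately show ?thesis by (simp add: qint_def)
qed

lemma qfact_nz: assumes qg: "\<forall>k\<ge>1. q ^ k \<noteq> (1::'a::field)" shows "qfact q k \<noteq> 0"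
  unfolding qfact_def using qint_nz[OF qg] by (simp add: prod_zero_iff)

lemma zero_choose_two[simp]: "(0::nat) choose 2 = 0" by (simp add: numeral_2_eq_2)

lemma one_choose_two[simp]: "Suc 0 choose 2 = 0" by (simp add: numeral_2_eq_2)

lemma coeff_lpoly:
  assumes qg: "\<forall>k\<ge>1. q ^ k \<noteq> (1::'a::field)"
  shows "coeff (lpoly q m s p) d = (if d \<le> p \<and> even (p - d) then acoef q m s p ((p - d) div 2) else 0)"
proof (cases "p = 0")
  case True
  then show ?thesis by (auto simp: lpoly_def acoef_def qfact_nz[OF qg] binomial_eq_0_iff)
next
  case False
  have eq: "\<And>k. k \<in> {0..p div 2} \<Longrightarrow> (p - 2*k = d) = (d \<le> p \<and> even (p-d) \<and> k = (p-d) div 2)"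
    by auto
  have "coeff (lpoly q m s p) d = (\<Sum>k\<in>{0..p div 2}. (if k = (p-d) div 2 \<and> d \<le> p \<and> even (p-d) then acoef q m s p k else 0))"
    using False unfolding lpoly_def
    by (auto simp: coeff_sum coeff_monom acoef_def eq intro!: sum.cong)
  also have "\<dots> = (if d \<le> p \<and> even (p - d) then acoef q m s p ((p - d) div 2) else 0)"
  proof (cases "d \<le> p \<and> even (p - d)")
    case True
    have "(p-d) div 2 \<in> {0..p div 2}" by auto
    then show ?thesis using True by (simp add: sum.delta')
  next
    case False
    then have "\<And>k. \<not> (k = (p-d) div 2 \<and> d \<le> p \<and> even (p-d))" by blast
    then show ?thesis using False by (simp only: if_False sum.neutral_const)
  qed
  finally show ?thesis .
qed

lemma key_qint:
  assumes "q \<noteq> (1::'a::field)"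
  shows "qint q (2*t+2+e) * qint q (i+2+t) = qint q (t+1) * qint q (i+2*t+3+e) + q^(t+1) * qint q (i+1) * qint q (t+e+1)"
proof -
  have "1 - q \<noteq> 0" using assms by simp
  have P: "(1-q^(2*t+2+e))*(1-q^(i+2+t)) = (1-q^(t+1))*(1-q^(i+2*t+3+e)) + q^(t+1)*((1-q^(i+1))*(1-q^(t+e+1)))"
    unfolding power_add mult_2 by algebra
  have "qint q (2*t+2+e) * qint q (i+2+t) = (1-q^(2*t+2+e))*(1-q^(i+2+t)) / (1-q)^2"
    unfolding qint_def by (simp add: power2_eq_square)
  also have "\<dots> = ((1-q^(t+1))*(1-q^(i+2*t+3+e)) + q^(t+1)*((1-q^(i+1))*(1-q^(t+e+1)))) / (1-q)^2"
    using P by simp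
  also have "\<dots> = qint q (t+1) * qint q (i+2*t+3+e) + q^(t+1) * qint q (i+1) * qint q (t+e+1)"
    unfolding qint_def by (simp add: power2_eq_square add_divide_distrib)
  finally show ?thesis .
qed

definition wt :: "'a::field \<Rightarrow> nat \<Rightarrow> nat \<Rightarrow> nat \<Rightarrow> 'a" where
  "wt q r N j = (-1)^j * q^((r-j) choose 2) * qfact q (N-2*j) * qfact q (N-r-j-1)
      / (qfact q j * qfact q (r-j) * qfact q (N-j) * qfact q (N-2*j-1))"

definition Gt :: "'a::field \<Rightarrow> nat \<Rightarrow> nat \<Rightarrow> nat \<Rightarrow> 'a" where
  "Gt q r N J = (if J = 0 \<or> J > r then 0 else (-1)^(J-1) * q^((r-J+1) choose 2) * qfact q (N-r-J)
      / (qfact q (J-1) * qfact q (r-J) * qfact q (N-J) * qint q r))"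

lemma gen_mid:
  fixes \<sigma> P A B C D E I1 I2 Ii It Ie Ir Iet x :: "'a::field"
  assumes nz: "A \<noteq> 0" "B \<noteq> 0" "C \<noteq> 0" "D \<noteq> 0" "E \<noteq> 0" "I1 \<noteq> 0"
     "Ii \<noteq> 0" "It \<noteq> 0" "Ie \<noteq> 0" "Ir \<noteq> 0"
    and K: "I2*Ir = It*Ie + x*Ii*Iet"
  shows "-\<sigma>*P*(B*I1*I2)*A/((C*Ii)*(D*It)*(E*Ie)*(B*I1))
     = -\<sigma>*P*A/((C*Ii)*D*E*Ir) - \<sigma>*(P*x)*(A*Iet)/(C*(D*It)*(E*Ie)*Ir)"
proof -
  have "-\<sigma>*P*(B*I1*I2)*A/((C*Ii)*(D*It)*(E*Ie)*(B*I1)) = -\<sigma>*P*A*(I2*Ir)/(C*Ii*D*It*E*Ie*Ir)"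
    using nz by (simp add: field_simps)
  also have "\<dots> = -\<sigma>*P*A*(It*Ie + x*Ii*Iet)/(C*Ii*D*It*E*Ie*Ir)" using K by simp
  also have "\<dots> = -\<sigma>*P*A/((C*Ii)*D*E*Ir) - \<sigma>*(P*x)*(A*Iet)/(C*(D*It)*(E*Ie)*Ir)"
    using nz by (simp add: field_simps)
  finally show ?thesis .
qed

lemma tele_mid:
  assumes qg: "\<forall>k\<ge>1. q ^ k \<noteq> (1::'a::field)"
    and r: "r = i+2+t" and N: "N = 2*r+e"
  shows "wt q r N (i+1) = Gt q r N (i+2) - Gt q r N (i+1)"
proof -
  have q1: "q \<noteq> 1" using qg by (metis power_one_right order_refl)
  have a1: "r - (i+1) = Suc t" "N - 2*(i+1) = Suc (Suc (2*t+e))" "N - r - (i+1) - 1 = t+e"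
     "N - (i+1) = Suc (i+2*t+2+e)" "N - 2*(i+1) - 1 = Suc (2*t+e)"
     "i+2-1 = Suc i" "r - (i+2) + 1 = Suc t" "N - r - (i+2) = t+e" "r - (i+2) = t"
     "N - (i+2) = i+2*t+2+e" "i+1-1 = i" "r - (i+1) + 1 = Suc (Suc t)" "N - r - (i+1) = Suc (t+e)"
     "(i+2 = 0 \<or> i+2 > r) = False" "(i+1 = 0 \<or> i+1 > r) = False"
    using r N by auto
  have c: "(Suc (Suc t) choose 2) = (Suc t choose 2) + Suc t"
    by (simp add: numeral_2_eq_2)
  have K0: "qint q (2*t+2+e) * qint q (i+2+t) = qint q (t+1) * qint q (i+2*t+3+e) + q^(t+1) * qint q (i+1) * qint q (t+e+1)"
    using key_qint[OF q1] .
  have K: "qint q (Suc (Suc (2*t+e))) * qint q r = qint q (Suc t) * qint q (Suc (i+2*t+2+e)) + q^(Suc t) * qint q (Suc i) * qint q (Suc (t+e))"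
  proof -
    have e: "2*t+2+e = Suc(Suc(2*t+e))" "i+2+t = r" "t+1 = Suc t" "i+2*t+3+e = Suc(i+2*t+2+e)"
      "i+1 = Suc i" "t+e+1 = Suc(t+e)" using r by simp_all
    show ?thesis using K0 unfolding e .
  qed
  have nz: "\<And>k. qfact q k \<noteq> 0" using qfact_nz[OF qg] .
  have nzi: "\<And>k. qint q (Suc k) \<noteq> 0" using qint_nz[OF qg] by simp
  have nzr: "qint q r \<noteq> 0" using nzi r by simp
  have f: "qfact q (Suc(Suc(2*t+e))) = qfact q (2*t+e) * qint q (Suc(2*t+e)) * qint q (Suc(Suc(2*t+e)))"
    "qfact q (Suc(2*t+e)) = qfact q (2*t+e) * qint q (Suc(2*t+e))"
    "qfact q (i+1) = qfact q i * qint q (Suc i)"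
    "qfact q (Suc i) = qfact q i * qint q (Suc i)"
    "qfact q (Suc t) = qfact q t * qint q (Suc t)"
    "qfact q (Suc(i+2*t+2+e)) = qfact q (i+2*t+2+e) * qint q (Suc(i+2*t+2+e))"
    "qfact q (Suc(t+e)) = qfact q (t+e) * qint q (Suc(t+e))"
    by (simp_all add: qfact_Suc)
  have s1: "(-1::'a)^(i+1) = - ((-1::'a)^i)" "(-1::'a)^(Suc i) = - ((-1::'a)^i)" by simp_all
  have "wt q r N (i+1) = -((-1)^i)*(q^(Suc t choose 2))*(qfact q (2*t+e) * qint q (Suc(2*t+e)) * qint q (Suc(Suc(2*t+e))))*qfact q (t+e)
     / ((qfact q i * qint q (Suc i))*(qfact q t * qint q (Suc t))*(qfact q (i+2*t+2+e) * qint q (Suc(i+2*t+2+e)))*(qfact q (2*t+e) * qint q (Suc(2*t+e))))"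
    unfolding wt_def a1 s1 using nz nzi by (simp add: qfact_Suc field_simps)
  also have "\<dots> = -((-1)^i)*(q^(Suc t choose 2))*qfact q (t+e)/((qfact q i * qint q (Suc i))*qfact q t*qfact q (i+2*t+2+e)*qint q r)
     - ((-1)^i)*((q^(Suc t choose 2))*q^(Suc t))*(qfact q (t+e)*qint q (Suc(t+e)))/(qfact q i*(qfact q t * qint q (Suc t))*(qfact q (i+2*t+2+e) * qint q (Suc(i+2*t+2+e)))*qint q r)"
    by (rule gen_mid[OF _ _ _ _ _ _ _ _ _ _ K]) (simp_all add: nz nzi nzr)
  also have "\<dots> = Gt q r N (i+2) - Gt q r N (i+1)"
    unfolding Gt_def a1 s1 if_False using nz nzi by (simp add: qfact_Suc field_simps c power_add)
  finally show ?thesis .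
qed


lemma tele_first:
  assumes qg: "\<forall>k\<ge>1. q ^ k \<noteq> (1::'a::field)"
    and r: "r = Suc t" and N: "N = 2*r+e"
  shows "wt q r N 0 = Gt q r N (Suc 0) - Gt q r N 0"
proof -
  have nz: "\<And>k. qfact q k \<noteq> 0" using qfact_nz[OF qg] .
  have nzi: "\<And>k. qint q (Suc k) \<noteq> 0" using qint_nz[OF qg] by simp
  have a: "r - 0 = Suc t" "N - 2*0 = N" "N - r - 0 - 1 = t+e" "N - 0 = N" "N - 2*0 - 1 = Suc (2*t+e)"
    "Suc 0 - 1 = 0" "r - Suc 0 + 1 = Suc t" "N - r - Suc 0 = t+e" "r - Suc 0 = t" "N - Suc 0 = Suc (2*t+e)"
    "(Suc 0 = 0 \<or> Suc 0 > r) = False" "((0::nat) = 0 \<or> 0 > r) = True"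
    using r N by auto
  have b: "qfact q N = qfact q (Suc (2*t+e)) * qint q N"
    using N r qfact_Suc[of q "Suc(2*t+e)"] by simp
  show ?thesis unfolding wt_def Gt_def a if_False if_True
    using nz nzi by (simp add: qfact_Suc field_simps a r)
qed

lemma tele_last:
  assumes qg: "\<forall>k\<ge>1. q ^ k \<noteq> (1::'a::field)"
    and r: "r = Suc t" and N: "N = 2*r+e"
  shows "wt q r N r = Gt q r N (Suc r) - Gt q r N r"
proof -
  have nz: "\<And>k. qfact q k \<noteq> 0" using qfact_nz[OF qg] .
  have nzi: "\<And>k. qint q (Suc k) \<noteq> 0" using qint_nz[OF qg] by simp
  have a: "r - r = 0" "N - 2*r = e" "N - r - r - 1 = e - 1" "N - r = Suc t + e" "N - 2*r - 1 = e - 1"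
    "r - 1 = t" "r - r + 1 = 1" "N - r - r = e"
    "(Suc r = 0 \<or> Suc r > r) = True" "(r = 0 \<or> r > r) = False"
    using r N by auto
  have s: "(-1::'a)^r = - ((-1)^t)" using r by simp
  show ?thesis unfolding wt_def Gt_def a if_False if_True s
    using nz nzi r by (simp add: qfact_Suc field_simps)
qed

lemma tele_sum:
  assumes qg: "\<forall>k\<ge>1. q ^ k \<noteq> (1::'a::field)"
    and r: "r \<ge> 1" and N: "N = 2*r+e"
  shows "(\<Sum>j=0..r. wt q r N j) = 0"
proof -
  obtain t where t: "r = Suc t" using r by (cases r) auto
  have "\<forall>j\<in>{0..r}. wt q r N j = Gt q r N (Suc j) - Gt q r N j"
  proof
    fix j assume j: "j \<in> {0..r}"
    show "wt q r N j = Gt q r N (Suc j) - Gt q r N j"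
    proof (cases "j = 0")
      case True then show ?thesis using tele_first[OF qg t N] by simp
    next
      case False
      show ?thesis
      proof (cases "j = r")
        case True then show ?thesis using tele_last[OF qg t N] by simp
      next
        case False
        obtain i where i: "j = i+1" using \<open>j \<noteq> 0\<close> by (cases j) auto
        have "i+1 < r" using False j i by auto
        then obtain u where u: "r = i+2+u" by (metis add_2_eq_Suc' add.commute less_iff_Suc_add Suc_eq_plus1 add.assoc)
        show ?thesis using tele_mid[OF qg u N] i by (simp add: numeral_2_eq_2)
      qed
    qed
  qed
  then have "(\<Sum>j=0..r. wt q r N j) = (\<Sum>j=0..r. Gt q r N (Suc j) - Gt q r N j)" by (intro sum.cong) auto
  also have "\<dots> = Gt q r N (Suc r) - Gt q r N 0" by (rule sum_Suc_diff) simp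
  also have "\<dots> = 0" by (simp add: Gt_def)
  finally show ?thesis .
qed


definition bcoef :: "'a::field \<Rightarrow> nat \<Rightarrow> 'a \<Rightarrow> nat \<Rightarrow> nat \<Rightarrow> 'a" where
  "bcoef q m s n k = (- s) ^ k * qfact q n / (qfact q k * qfact q (n - 2 * k))
                     * qfact q (n + m - 2 * k) / qfact q (n + m - k)"

lemma prod_term:
  assumes qg: "\<forall>k\<ge>1. q ^ k \<noteq> (1::'a::field)"
    and n: "n = d + 2*r" and j: "j \<le> r"
  shows "bcoef q m s n j * acoef q m s (n - 2*j) (r - j) = s^r * qfact q n / qfact q (n - 2*r) * wt q r (n+m) j"
proof -
  have nz: "\<And>k. qfact q k \<noteq> 0" using qfact_nz[OF qg] .
  have a: "n - 2*j - 2*(r-j) = n - 2*r" "m + (n - 2*j) - (r-j) - 1 = n + m - r - j - 1"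
     "m + (n - 2*j) - 1 = n + m - 2*j - 1" using n j by auto
  have sp: "s^r = s^j * s^(r-j)" using j by (simp add: power_add[symmetric])
  show ?thesis unfolding bcoef_def acoef_def wt_def a sp power_minus[of s]
    using nz by (simp add: field_simps)
qed

lemma part1:
  assumes qg: "\<forall>k\<ge>1. q ^ k \<noteq> (1::'a::field)"
  shows "monom 1 n = (\<Sum>k\<in>{0..n div 2}. smult (bcoef q m s n k) (lpoly q m s (n - 2 * k)))"
proof (rule poly_eqI)
  fix d
  have nz: "\<And>k. qfact q k \<noteq> 0" using qfact_nz[OF qg] .
  have R: "coeff (\<Sum>k\<in>{0..n div 2}. smult (bcoef q m s n k) (lpoly q m s (n - 2 * k))) d
     = (\<Sum>j\<in>{0..n div 2}. bcoef q m s n j * (if d \<le> n - 2*j \<and> even (n - 2*j - d)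
          then acoef q m s (n - 2*j) ((n - 2*j - d) div 2) else 0))"
    by (simp add: coeff_sum coeff_lpoly[OF qg])
  show "coeff (monom 1 n) d = coeff (\<Sum>k\<in>{0..n div 2}. smult (bcoef q m s n k) (lpoly q m s (n - 2 * k))) d"
  proof (cases "d \<le> n \<and> even (n - d)")
    case False
    have H: "\<forall>j\<in>{0..n div 2}. \<not> (d \<le> n - 2*j \<and> even (n - 2*j - d))"
    proof (intro ballI notI)
      fix j assume j: "j \<in> {0..n div 2}" and h: "d \<le> n - 2*j \<and> even (n - 2*j - d)"
      then have "n - d = (n-2*j-d) + 2*j" by auto
      then show False using h False by auto
    qed
    have "coeff (\<Sum>k\<in>{0..n div 2}. smult (bcoef q m s n k) (lpoly q m s (n - 2 * k))) d = 0"
      unfolding R by (intro sum.neutral) (use H in auto)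
    moreover have "n \<noteq> d" using False by auto
    ultimately show ?thesis by (simp add: coeff_monom)
  next
    case True
    then obtain r where n: "n = d + 2*r" by (metis dvd_def le_add_diff_inverse evenE)
    have c: "\<And>j. j \<in> {0..n div 2} \<Longrightarrow> (d \<le> n - 2*j \<and> even (n - 2*j - d)) = (j \<in> {0..r})
         \<and> (n - 2*j - d) div 2 = r - j"
      using n by auto
    have "coeff (\<Sum>k\<in>{0..n div 2}. smult (bcoef q m s n k) (lpoly q m s (n - 2 * k))) d
       = (\<Sum>j\<in>{0..n div 2}. if j \<in> {0..r} then bcoef q m s n j * acoef q m s (n - 2*j) (r - j) else 0)"
      unfolding R by (intro sum.cong refl) (use c in auto)
    also have "\<dots> = (\<Sum>j\<in>{0..r}. bcoef q m s n j * acoef q m s (n - 2*j) (r - j))"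
    proof -
      have I: "{0..n div 2} \<inter> {0..r} = {0..r}" using n by auto
      show ?thesis unfolding sum.inter_restrict[OF finite_atLeastAtMost, symmetric] I ..
    qed
    also have "\<dots> = (\<Sum>j\<in>{0..r}. s^r * qfact q n / qfact q (n - 2*r) * wt q r (n+m) j)"
      by (intro sum.cong refl prod_term[OF qg n]) auto
    also have "\<dots> = s^r * qfact q n / qfact q (n - 2*r) * (\<Sum>j\<in>{0..r}. wt q r (n+m) j)"
      by (simp add: sum_distrib_left)
    also have "\<dots> = coeff (monom 1 n) d"
    proof (cases "r = 0")
      case True
      then show ?thesis using n nz by (simp add: wt_def coeff_monom)
    next
      case False
      have "(\<Sum>j\<in>{0..r}. wt q r (n+m) j) = 0"
        by (rule tele_sum[OF qg _, of r "n+m" "d+m"]) (use False n in auto)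
      then show ?thesis using False n by (simp add: coeff_monom)
    qed
    finally show ?thesis by simp
  qed
qed


lemma lin_sum:
  assumes add: "\<forall>p r. \<Lambda> (p + r) = \<Lambda> p + \<Lambda> r"
    and hom: "\<forall>c p. \<Lambda> (smult c p) = c * \<Lambda> p"
  shows "\<Lambda> (\<Sum>k\<in>A. f k) = (\<Sum>k\<in>A. (\<Lambda> (f k) :: 'a::field))"
proof (cases "finite A")
  case True
  have z: "\<Lambda> 0 = 0" using hom[rule_format, of 0 0] by simp
  from True show ?thesis by (induction A rule: finite_induct) (simp_all add: z add)
next
  case False
  have z: "\<Lambda> 0 = 0" using hom[rule_format, of 0 0] by simp
  then show ?thesis using False by simp
qed

theorem mainTheorem9:
  fixes q s :: "'a::field_char_0" and m :: nat
  assumes q_generic: "\<forall>k\<ge>1. q ^ k \<noteq> 1"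
  shows "(\<forall>n. monom 1 n =
           (\<Sum>k\<in>{0..n div 2}.
              smult ((- s) ^ k * qfact q n / (qfact q k * qfact q (n - 2 * k))
                     * qfact q (n + m - 2 * k) / qfact q (n + m - k))
                    (lpoly q m s (n - 2 * k))))
       \<and> (\<forall>\<Lambda> :: 'a poly \<Rightarrow> 'a.
            (\<forall>p r. \<Lambda> (p + r) = \<Lambda> p + \<Lambda> r) \<longrightarrow>
            (\<forall>c p. \<Lambda> (smult c p) = c * \<Lambda> p) \<longrightarrow>
            (\<forall>n. \<Lambda> (lpoly q m (- (q ^ m)) n) = of_bool (n = 0)) \<longrightarrow>
            (\<forall>n. \<Lambda> (monom 1 (2 * n + 1)) = 0 \<and>
                 \<Lambda> (monom 1 (2 * n)) =
                   q ^ (m * n) * (qfact q (2 * n) * qfact q m) / (qfact q n * qfact q (m + n))))"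
proof (intro conjI allI impI)
  fix n
  show "monom 1 n =
           (\<Sum>k\<in>{0..n div 2}.
              smult ((- s) ^ k * qfact q n / (qfact q k * qfact q (n - 2 * k))
                     * qfact q (n + m - 2 * k) / qfact q (n + m - k))
                    (lpoly q m s (n - 2 * k)))"
    using part1[OF q_generic, of n m s] by (simp add: bcoef_def)
next
  fix \<Lambda> :: "'a poly \<Rightarrow> 'a" and n
  assume add: "\<forall>p r. \<Lambda> (p + r) = \<Lambda> p + \<Lambda> r"
    and hom: "\<forall>c p. \<Lambda> (smult c p) = c * \<Lambda> p"
    and nrm: "\<forall>n. \<Lambda> (lpoly q m (- (q ^ m)) n) = of_bool (n = 0)"
  have M: "\<And>N. \<Lambda> (monom 1 N) = (\<Sum>j\<in>{0..N div 2}. bcoef q m (-(q^m)) N j * of_bool (N - 2*j = 0))"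
  proof -
    fix N
    have "\<Lambda> (monom 1 N) = \<Lambda> (\<Sum>k\<in>{0..N div 2}. smult (bcoef q m (-(q^m)) N k) (lpoly q m (-(q^m)) (N - 2 * k)))"
      using part1[OF q_generic, of N m "-(q^m)"] by simp
    also have "\<dots> = (\<Sum>j\<in>{0..N div 2}. bcoef q m (-(q^m)) N j * of_bool (N - 2*j = 0))"
      unfolding lin_sum[OF add hom] using hom nrm by simp
    finally show "?thesis N" .
  qed
  have "\<Lambda> (monom 1 (2 * n + 1)) = (\<Sum>j\<in>{0..(2*n+1) div 2}. bcoef q m (-(q^m)) (2*n+1) j * of_bool (2*n+1 - 2*j = 0))"
    by (rule M)
  also have "\<dots> = 0" by (intro sum.neutral) auto
  finally show "\<Lambda> (monom 1 (2 * n + 1)) = 0" .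
  have "\<Lambda> (monom 1 (2 * n)) = (\<Sum>j\<in>{0..(2*n) div 2}. bcoef q m (-(q^m)) (2*n) j * of_bool (2*n - 2*j = 0))"
    by (rule M)
  also have "\<dots> = (\<Sum>j\<in>{0..n}. if j = n then bcoef q m (-(q^m)) (2*n) n else 0)"
    by (intro sum.cong) auto
  also have "\<dots> = bcoef q m (-(q^m)) (2*n) n" by simp
  also have "\<dots> = q ^ (m * n) * (qfact q (2 * n) * qfact q m) / (qfact q n * qfact q (m + n))"
  proof -
    have a: "2*n - 2*n = 0" "2*n + m - 2*n = m" "2*n + m - n = m + n" by auto
    show ?thesis unfolding bcoef_def a by (simp add: power_mult)
  qed
  finally show "\<Lambda> (monom 1 (2 * n)) = q ^ (m * n) * (qfact q (2 * n) * qfact q m) / (qfact q n * qfact q (m + n))" .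
qed

end
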